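(* There is an absolute constant $c>0$ such that the following holds. Let $n,m\ge1$ be integers, $\alpha,\beta,\gamma\in(0,1/2)$ with $\alpha n\ge2$, let $X\sim\mathcal{D}^n$, let $x\in S^{n-1}$ be $(\alpha,\gamma)$-incompressible, and let $D=\mathrm{LCD}_{\alpha,\beta}(x)$. Then for every $\varepsilon\ge 1/(2\pi mD)$, $$\Pr[|\langle X,x\rangle|\le\varepsilon]\le c\left(\frac{\varepsilon}{\gamma}+\frac{1}{(\alpha\beta m)^{\alpha n}}\right).$$
   Context: For an integer $m\ge1$, $\mathcal{D}$ denotes the uniform distribution on $\{a/m: a\in\{-m,\ldots,m\}\}$, and $\mathcal{D}^n$ the distribution of a random vector in $\mathbb{R}^n$ with independent $\mathcal{D}$-distributed coordinates. For $y\in\mathbb{R}^n$ write $y=[y]+\{y\}$ with $[y]\in\mathbb{Z}^n$ and $\{y\}\in[-1/2,1/2]^n$ (coordinatewise nearest-integer rounding). For $\alpha,\gamma\in(0,1)$, a unit vector $x\in S^{n-1}$ is $(\alpha,\gamma)$-compressible if $x=u+v$ where $u$ has at most $\alpha n$ nonzero coordinates and $\|v\|_2\le\gamma$; otherwise $x$ is $(\alpha,\gamma)$-incompressible. For $x\in S^{n-1}$, $\mathrm{LCD}_{\alpha,\beta}(x)$ is the infimum of all $D>0$ such that $\{Dx\}=u+v$ with $u$ having at most $\alpha n$ nonzero coordinates and $\|v\|_2\le\beta\min(D,\sqrt n)$ (infimum of the empty set being $+\infty$). *)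

theory Defs
  imports "HOL-Probability.Probability"
begin

text \<open>Vectors in R^n are represented as functions nat => real; only coordinates i < n matter.\<close>

definition vnorm :: "nat \<Rightarrow> (nat \<Rightarrow> real) \<Rightarrow> real" where
  "vnorm n v = sqrt (\<Sum>i<n. (v i)^2)"

definition on_sphere :: "nat \<Rightarrow> (nat \<Rightarrow> real) \<Rightarrow> bool" where
  "on_sphere n x \<longleftrightarrow> vnorm n x = 1"

definition supp_card :: "nat \<Rightarrow> (nat \<Rightarrow> real) \<Rightarrow> nat" where
  "supp_card n u = card {i. i < n \<and> u i \<noteq> 0}"

text \<open>Nearest-integer rounding: {y} = y - [y], in [-1/2,1/2].\<close>
definition frac_part :: "real \<Rightarrow> real" where
  "frac_part y = y - of_int (round y)"

definition compressible :: "nat \<Rightarrow> real \<Rightarrow> real \<Rightarrow> (nat \<Rightarrow> real) \<Rightarrow> bool" where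
  "compressible n \<alpha> \<gamma> x \<longleftrightarrow> on_sphere n x \<and>
     (\<exists>u v. (\<forall>i<n. x i = u i + v i) \<and> real (supp_card n u) \<le> \<alpha> * real n \<and> vnorm n v \<le> \<gamma>)"

definition incompressible :: "nat \<Rightarrow> real \<Rightarrow> real \<Rightarrow> (nat \<Rightarrow> real) \<Rightarrow> bool" where
  "incompressible n \<alpha> \<gamma> x \<longleftrightarrow> on_sphere n x \<and> \<not> compressible n \<alpha> \<gamma> x"

text \<open>LCD as an extended real; the infimum of the empty set is +infinity.\<close>
definition LCD :: "nat \<Rightarrow> real \<Rightarrow> real \<Rightarrow> (nat \<Rightarrow> real) \<Rightarrow> ereal" where
  "LCD n \<alpha> \<beta> x = Inf (ereal ` {D. D > 0 \<and>
     (\<exists>u v. (\<forall>i<n. frac_part (D * x i) = u i + v i) \<and> real (supp_card n u) \<le> \<alpha> * real n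
        \<and> vnorm n v \<le> \<beta> * min D (sqrt (real n)))})"

text \<open>The distribution D^n: uniform on {a/m : a in {-m..m}}^n (coordinates i < n; others fixed to 0).\<close>
definition Dn :: "nat \<Rightarrow> nat \<Rightarrow> (nat \<Rightarrow> real) pmf" where
  "Dn m n = pmf_of_set (PiE {..<n} (\<lambda>_. {real_of_int a / real m | a. a \<in> {- int m..int m}}))"

end

theory Submission
  imports Defs
begin

lemma f3: "fact 3 = (6::real)" by (simp add: eval_nat_numeral)
lemma sin_lower: fixes w::real assumes "0 \<le> w" "w \<le> pi/2" shows "7*w/12 \<le> sin w"
proof -
  have "\<bar>sin w - (\<Sum>m<3. sin_coeff m * w ^ m)\<bar> \<le> inverse (fact 3) * \<bar>w\<bar> ^ 3"
    by (rule Maclaurin_sin_bound)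
  also have "(\<Sum>m<3. sin_coeff m * w ^ m) = w"
    by (simp add: sin_coeff_def eval_nat_numeral)
  also have "inverse (fact 3) * \<bar>w\<bar> ^ 3 = w^3/6"
  proof -
    have "\<bar>w\<bar> ^ 3 = w^3" using assms by simp
    then show ?thesis by (simp only: f3) simp
  qed
  finally have h: "\<bar>sin w - w\<bar> \<le> w^3/6" .
  have "pi \<le> 79/25" using pi_approx by simp
  then have w1: "w \<le> 79/50" using assms by linarith
  have "w*w \<le> (79/50)*(79/50)" using w1 assms by (intro mult_mono) auto
  then have "w*w \<le> 5/2" by linarith
  then have "w*(w*w) \<le> w*(5/2)" using assms by (intro mult_left_mono) auto
  then have "w^3/6 \<le> 5*w/12" by (simp add: power3_eq_cube)
  then show ?thesis using h by linarith
qed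

lemma cos_upper: fixes z::real assumes "\<bar>z\<bar> \<le> pi" shows "cos z \<le> 1 - 49/288*z^2"
proof -
  have c: "cos z = cos \<bar>z\<bar>" by simp
  have "cos \<bar>z\<bar> = 1 - 2 * sin (\<bar>z\<bar>/2) ^ 2" using cos_double_sin[of "\<bar>z\<bar>/2"] by simp
  moreover have s: "7*(\<bar>z\<bar>/2)/12 \<le> sin (\<bar>z\<bar>/2)" using assms by (intro sin_lower) auto
  then have "(7*(\<bar>z\<bar>/2)/12)^2 \<le> sin (\<bar>z\<bar>/2) ^ 2" by (intro power_mono) auto
  moreover have "(7*(\<bar>z\<bar>/2)/12)^2 = 49/576*z^2" by (simp add: power2_eq_square)
  ultimately show ?thesis using c by linarith
qed

lemma dirichlet: fixes y::real
  shows "(\<Sum>b\<in>{-int m..int m}. cos (2 * y * of_int b)) * sin y = sin ((2 * real m + 1) * y)"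
proof (induction m)
  case 0 then show ?case by simp
next
  case (Suc m)
  have e: "{-int (Suc m)..int (Suc m)} = insert (int m + 1) (insert (-(int m + 1)) {-int m..int m})" by auto
  have "(\<Sum>b\<in>{-int (Suc m)..int (Suc m)}. cos (2 * y * of_int b)) = 
        cos (2 * y * of_int (int m + 1)) + (cos (2 * y * of_int (-(int m + 1))) + (\<Sum>b\<in>{-int m..int m}. cos (2 * y * of_int b)))"
    unfolding e by (simp add: sum.insert)
  also have "cos (2 * y * of_int (-(int m + 1))) = cos (2 * y * (real m + 1))"
    using cos_minus[of "2 * y * (real m + 1)"] by (simp add: algebra_simps)
  also have "cos (2 * y * of_int (int m + 1)) + (cos (2 * y * (real m + 1)) + (\<Sum>b\<in>{-int m..int m}. cos (2 * y * of_int b)))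
     = 2 * cos(2 * y * (real m + 1)) + (\<Sum>b\<in>{-int m..int m}. cos (2 * y * of_int b))" by simp
  finally have "(\<Sum>b\<in>{-int (Suc m)..int (Suc m)}. cos (2 * y * of_int b)) * sin y
     = 2 * cos(2 * y * (real m + 1)) * sin y + sin ((2 * real m + 1) * y)" using Suc by (simp add: algebra_simps)
  also have "2 * cos(2 * y * (real m + 1)) * sin y = sin (2 * y * (real m + 1) + y) - sin (2 * y * (real m + 1) - y)"
    by (simp add: sin_add sin_diff)
  finally show ?case by (simp add: algebra_simps)
qed

lemma sumsq: "(\<Sum>b\<in>{-int m..int m}. (real_of_int b)^2) = real m * (real m + 1) * (2 * real m + 1) / 3"
proof (induction m)
  case 0 then show ?case by simp
next
  case (Suc m)
  have e: "{-int (Suc m)..int (Suc m)} = insert (int m + 1) (insert (-(int m + 1)) {-int m..int m})" by auto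
  have "(\<Sum>b\<in>{-int (Suc m)..int (Suc m)}. (real_of_int b)^2) = (real m + 1)^2 + ((real m + 1)^2 + (\<Sum>b\<in>{-int m..int m}. (real_of_int b)^2))"
    unfolding e by (simp add: sum.insert power2_eq_square algebra_simps)
  then show ?case using Suc by (simp add: algebra_simps power2_eq_square)
qed

definition psi :: "nat \<Rightarrow> real \<Rightarrow> real" where
  "psi m \<theta> = (\<Sum>b\<in>{-int m..int m}. cos (2 * pi * \<theta> * of_int b)) / (2 * real m + 1)"

lemma psi_abs_le1: "\<bar>psi m \<theta>\<bar> \<le> 1"
proof -
  have "\<bar>\<Sum>b\<in>{-int m..int m}. cos (2 * pi * \<theta> * of_int b)\<bar> \<le> (\<Sum>b\<in>{-int m..int m}. \<bar>cos (2 * pi * \<theta> * of_int b)\<bar>)"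
    by (rule sum_abs)
  also have "\<dots> \<le> (\<Sum>b\<in>{-int m..int m}. 1)" by (intro sum_mono) auto
  also have "\<dots> = 2 * real m + 1" by simp
  finally show ?thesis unfolding psi_def by (simp add: abs_div)
qed

lemma psi_periodic: "psi m (\<theta> + of_int k) = psi m \<theta>"
proof -
  have "cos (2 * pi * (\<theta> + of_int k) * of_int b) = cos (2 * pi * \<theta> * of_int b)" for b
  proof -
    have "2 * pi * (\<theta> + of_int k) * of_int b = 2 * pi * \<theta> * of_int b + (2*pi) * of_int (k*b)"
      by (simp add: algebra_simps)
    then show ?thesis by (simp only: cos_add cos_int_2pin sin_int_2pin) (simp?)
  qed
  then show ?thesis unfolding psi_def by simp
qed

lemma psi_minus: "psi m (-\<theta>) = psi m \<theta>"
proof -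
  have "cos (2 * pi * (-\<theta>) * of_int b) = cos (2 * pi * \<theta> * of_int b)" for b
    using cos_minus[of "2 * pi * \<theta> * of_int b"] by (simp add: algebra_simps)
  then show ?thesis unfolding psi_def by simp
qed

lemma psi_frac: "psi m \<theta> = psi m \<bar>frac_part \<theta>\<bar>"
proof -
  have "psi m \<theta> = psi m (frac_part \<theta> + of_int (round \<theta>))" unfolding frac_part_def by simp
  also have "\<dots> = psi m (frac_part \<theta>)" by (rule psi_periodic)
  also have "\<dots> = psi m \<bar>frac_part \<theta>\<bar>" by (cases "frac_part \<theta> \<ge> 0") (auto simp: psi_minus)
  finally show ?thesis .
qed

lemma frac_abs_le: "\<bar>frac_part \<theta>\<bar> \<le> 1/2"
  by (metis frac_part_def of_int_round_abs_le abs_minus_commute)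

lemma psi_dirichlet: "(\<Sum>b\<in>{-int m..int m}. cos (2 * pi * d * of_int b)) * sin (pi * d) = sin ((2 * real m + 1) * (pi * d))"
  using dirichlet[of "pi * d" m] by (simp add: mult.assoc)

lemma psi_P2: assumes "m \<ge> 1" "0 < d" "d \<le> 1/2" shows "\<bar>psi m d\<bar> \<le> 2 / (7 * real m * d)"
proof -
  let ?S = "\<Sum>b\<in>{-int m..int m}. cos (2 * pi * d * of_int b)"
  have pi3: "3 \<le> pi" using pi_approx by simp
  have s1: "7 * (pi * d) / 12 \<le> sin (pi * d)" using assms by (intro sin_lower) auto
  have "7*d/4 \<le> 7 * (pi * d) / 12" using pi3 assms by (simp add: field_simps)
  then have s2: "7*d/4 \<le> sin (pi * d)" using s1 by linarith
  have pos: "0 < sin (pi * d)" using s2 assms by linarith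
  have "\<bar>?S\<bar> * sin (pi * d) = \<bar>sin ((2 * real m + 1) * (pi * d))\<bar>" 
    using psi_dirichlet[where m=m and d=d] pos by (metis abs_mult abs_of_pos)
  also have "\<dots> \<le> 1" by simp
  finally have "\<bar>?S\<bar> \<le> 1 / sin (pi * d)" using pos by (simp add: field_simps)
  also have "\<dots> \<le> 1 / (7*d/4)" using s2 assms by (intro divide_left_mono) auto
  finally have S: "\<bar>?S\<bar> \<le> 4 / (7*d)" by simp
  have "\<bar>psi m d\<bar> = \<bar>?S\<bar> / (2 * real m + 1)" unfolding psi_def by (simp add: abs_div)
  also have "\<dots> \<le> (4 / (7*d)) / (2 * real m + 1)" using S by (intro divide_right_mono) auto
  also have "\<dots> \<le> (4 / (7*d)) / (2 * real m)" using assms by (intro divide_left_mono) auto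
  also have "\<dots> = 2 / (7 * real m * d)" by (simp add: field_simps)
  finally show ?thesis .
qed


lemma psi_upper: assumes "m \<ge> 1" "0 \<le> d" "real m * d \<le> 1/2" shows "psi m d \<le> 1 - 2 * (real m * d)^2"
proof -
  have pi3: "3 \<le> pi" using pi_approx by simp
  have c: "cos (2 * pi * d * of_int b) \<le> 1 - 49/288 * (2 * pi * d * of_int b)^2" if b: "b \<in> {-int m..int m}" for b
  proof (rule cos_upper)
    have "\<bar>of_int b\<bar> \<le> real m" using b by auto
    then have "\<bar>2 * pi * d * of_int b\<bar> \<le> 2 * pi * d * real m" using assms
      by (simp add: abs_mult) (intro mult_left_mono, auto)
    also have "\<dots> \<le> pi" using assms by (simp add: field_simps)
    finally show "\<bar>2 * pi * d * of_int b\<bar> \<le> pi" .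
  qed
  have "(\<Sum>b\<in>{-int m..int m}. cos (2 * pi * d * of_int b)) \<le> (\<Sum>b\<in>{-int m..int m}. 1 - 49/288 * (2 * pi * d * of_int b)^2)"
    using c by (intro sum_mono) auto
  also have "\<dots> = (2 * real m + 1) - 49/72 * pi^2 * d^2 * (\<Sum>b\<in>{-int m..int m}. (of_int b)^2)"
    by (simp add: sum_subtractf sum_distrib_left power_mult_distrib algebra_simps)
  also have "\<dots> = (2 * real m + 1) * (1 - 49/216 * pi^2 * d^2 * (real m * (real m + 1)))"
    by (simp add: sumsq algebra_simps)
  finally have S: "(\<Sum>b\<in>{-int m..int m}. cos (2 * pi * d * of_int b)) \<le> (2 * real m + 1) * (1 - 49/216 * pi^2 * d^2 * (real m * (real m + 1)))" .
  have "3 * 3 \<le> pi * pi" using pi3 by (intro mult_mono) auto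
  then have "9 \<le> pi^2" by (simp add: power2_eq_square)
  then have "2 * (real m * d)^2 \<le> 49/216 * pi^2 * d^2 * (real m * (real m + 1))"
  proof -
    assume p9: "9 \<le> pi^2"
    have "0 \<le> d^2 * (real m * real m)" by simp
    then have "2 * (real m * d)^2 \<le> 49/216 * 9 * (d^2 * (real m * real m))" by (simp add: power2_eq_square algebra_simps)
    also have "\<dots> \<le> 49/216 * pi^2 * (d^2 * (real m * (real m + 1)))"
      using p9 by (intro mult_mono) (auto simp: mult_left_mono)
    finally show ?thesis by (simp add: algebra_simps)
  qed
  moreover have "psi m d \<le> 1 - 49/216 * pi^2 * d^2 * (real m * (real m + 1))"
  proof -
    have "psi m d \<le> (2 * real m + 1) * (1 - 49/216 * pi^2 * d^2 * (real m * (real m + 1))) / (2 * real m + 1)"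
      unfolding psi_def using S by (intro divide_right_mono) auto
    also have "\<dots> = 1 - 49/216 * pi^2 * d^2 * (real m * (real m + 1))" 
      by (rule nonzero_mult_div_cancel_left) simp
    finally show ?thesis .
  qed
  ultimately show ?thesis by linarith
qed

lemma psi_lower: assumes "m \<ge> 1" "0 < d" "real m * d \<le> 1/2" shows "psi m d \<ge> -1/3"
proof -
  let ?S = "\<Sum>b\<in>{-int m..int m}. cos (2 * pi * d * of_int b)"
  let ?u = "pi * d"
  have u0: "0 < ?u" using assms by simp
  have "1 * d \<le> real m * d" by (rule mult_right_mono) (use assms in auto)
  then have d12: "d \<le> 1/2" using assms by linarith
  have uh: "?u \<le> pi/2" using d12 by simp
  have spos: "0 < sin ?u" using u0 uh pi_gt_zero by (intro sin_gt_zero) auto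
  have mu: "2 * real m * ?u \<le> pi" using assms by (simp add: field_simps)
  have "- sin ?u \<le> sin ((2 * real m + 1) * ?u)"
  proof (cases "(2 * real m + 1) * ?u \<le> pi")
    case True
    then show ?thesis using sin_ge_zero[of "(2 * real m + 1) * ?u"] spos u0 by simp
  next
    case False
    define w where "w = (2 * real m + 1) * ?u - pi"
    have w0: "0 \<le> w" "w \<le> ?u" using False mu unfolding w_def by (auto simp: algebra_simps)
    have "sin ((2 * real m + 1) * ?u) = - sin w" unfolding w_def by (simp add: sin_diff)
    moreover have "sin w \<le> sin ?u" using w0 uh pi_gt_zero by (intro sin_monotone_2pi_le; linarith)
    ultimately show ?thesis by simp
  qed
  then have "- sin ?u \<le> ?S * sin ?u" using psi_dirichlet[where m=m and d=d] by simp
  then have "(-1) * sin ?u \<le> ?S * sin ?u" by simp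
  then have S1: "-1 \<le> ?S" using spos by (rule mult_right_le_imp_le)
  have m3: "3 \<le> 2 * real m + 1" using assms by simp
  have "-1 / 3 \<le> -1 / (2 * real m + 1)" using m3 by (simp add: field_simps)
  also have "-1 / (2 * real m + 1) \<le> ?S / (2 * real m + 1)" using S1 m3 by (intro divide_right_mono) auto
  finally show ?thesis unfolding psi_def .
qed

lemma psi_P5: assumes "m \<ge> 1" "0 \<le> d" "d \<le> 1/2" shows "(psi m d)^2 \<le> 1 / (1 + (real m * d)^2)"
proof (cases "real m * d \<le> 1/2")
  case True
  let ?y = "(real m * d)^2"
  have "?y \<le> (1/2)^2" using True assms by (intro power_mono) auto
  then have y: "0 \<le> ?y" "?y \<le> 1/4" by (auto simp: power2_eq_square)
  have up: "psi m d \<le> 1 - 2 * ?y" using psi_upper assms True by simp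
  have lo: "psi m d \<ge> -1/3"
  proof (cases "d = 0")
    case True then show ?thesis unfolding psi_def by simp
  next
    case False then show ?thesis using psi_lower assms \<open>real m * d \<le> 1/2\<close> by simp
  qed
  have "(psi m d)^2 \<le> (1 - 2 * ?y)^2" using up lo y by (intro power2_le_iff_abs_le[THEN iffD2]) auto
  also have "\<dots> \<le> 1 / (1 + ?y)"
  proof -
    have e: "(1 - 2 * ?y)^2 * (1 + ?y) = 1 - 3 * ?y + 4 * (?y * ?y) * ?y" by (simp add: power2_eq_square algebra_simps)
    have "?y * ?y \<le> (1/4) * (1/4)" using y by (intro mult_mono) auto
    then have "4 * (?y * ?y) * ?y \<le> 4 * (1/16) * ?y" using y by (intro mult_right_mono) auto
    then have "(1 - 2 * ?y)^2 * (1 + ?y) \<le> 1" using e y by linarith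
    moreover have pos: "0 < 1 + ?y" using y by linarith
    ultimately show ?thesis by (simp only: pos_le_divide_eq[OF pos])
  qed
  finally show ?thesis .
next
  case False
  then have d0: "0 < d" using assms by (cases "d = 0") auto
  have "\<bar>psi m d\<bar> \<le> 2 / (7 * real m * d)" using psi_P2 assms d0 by simp
  then have "(psi m d)^2 \<le> (2 / (7 * real m * d))^2" by (metis abs_ge_zero power2_abs power_mono)
  also have "\<dots> \<le> 1 / (1 + (real m * d)^2)"
  proof -
    let ?z = "real m * d"
    have z0: "0 < ?z" using assms d0 by simp
    have "(1/2)^2 \<le> ?z^2" using False by (intro power_mono) auto
    then have "1/4 \<le> ?z^2" by (simp add: power2_eq_square)
    moreover have "4 * (1 + ?z^2) = 4 + 4 * ?z^2" by (simp add: distrib_left)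
    ultimately have "4 * (1 + ?z^2) \<le> 49 * ?z^2" by linarith
    then have "4 / (49 * ?z^2) \<le> 1 / (1 + ?z^2)" using z0 by (simp add: field_simps)
    moreover have "(2 / (7 * real m * d))^2 = 4 / (49 * ?z^2)" by (simp add: power2_eq_square field_simps)
    ultimately show ?thesis by simp
  qed
  finally show ?thesis .
qed

lemma prod_subset_le:
  fixes f :: "'a \<Rightarrow> real"
  assumes "finite I" "S \<subseteq> I" "\<And>i. i \<in> I \<Longrightarrow> 0 \<le> f i \<and> f i \<le> 1"
  shows "prod f I \<le> prod f S"
proof -
  have "prod f I = prod f S * prod f (I - S)"
    using assms by (metis prod.subset_diff mult.commute)
  also have "\<dots> \<le> prod f S * 1"
    using assms by (intro mult_left_mono prod_le_1 prod_nonneg) auto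
  finally show ?thesis by simp
qed

lemma prod_one_plus:
  fixes a :: "'a \<Rightarrow> real"
  assumes "finite A" "\<And>i. i \<in> A \<Longrightarrow> 0 \<le> a i"
  shows "1 + sum a A \<le> (\<Prod>i\<in>A. 1 + a i)"
  using assms
proof (induction A rule: finite_induct)
  case empty then show ?case by simp
next
  case (insert x A)
  have ih: "1 + sum a A \<le> (\<Prod>i\<in>A. 1 + a i)" using insert by auto
  have ax: "0 \<le> a x" using insert by auto
  have sA: "0 \<le> sum a A" using insert by (intro sum_nonneg) auto
  have "1 + sum a (insert x A) = 1 + a x + sum a A" using insert by simp
  also have "\<dots> \<le> (1 + a x) * (1 + sum a A)" using ax sA by (simp add: algebra_simps)
  also have "\<dots> \<le> (1 + a x) * (\<Prod>i\<in>A. 1 + a i)" using ih ax by (intro mult_left_mono) auto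
  also have "\<dots> = (\<Prod>i\<in>insert x A. 1 + a i)" using insert by simp
  finally show ?case .
qed

lemma greedy_subset:
  fixes w :: "'a \<Rightarrow> real"
  assumes "finite A" "\<And>i. i \<in> A \<Longrightarrow> 0 \<le> w i \<and> w i \<le> b" "b \<le> sum w A" "0 < b"
  shows "\<exists>B\<subseteq>A. b \<le> sum w B \<and> sum w B < 2 * b"
  using assms
proof (induction A rule: finite_induct)
  case empty then show ?case by simp
next
  case (insert x A)
  show ?case
  proof (cases "b \<le> sum w A")
    case True
    then obtain B where "B \<subseteq> A" "b \<le> sum w B \<and> sum w B < 2 * b" using insert by auto
    then show ?thesis by blast
  next
    case False
    have "sum w (insert x A) = w x + sum w A" using insert by simp
    moreover have "w x \<le> b" using insert by auto
    ultimately have "sum w (insert x A) < 2 * b" using False by linarith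
    then show ?thesis using insert by blast
  qed
qed

lemma sphere_sum: "on_sphere n x \<Longrightarrow> (\<Sum>i<n. (x i)^2) = 1"
  unfolding on_sphere_def vnorm_def by (metis real_sqrt_eq_1_iff)

lemma incomp_mass:
  assumes inc: "incompressible n \<alpha> \<gamma> x" and g: "0 < \<gamma>" and J: "J \<subseteq> {..<n}" "real (card J) \<le> \<alpha> * real n"
  shows "\<gamma>^2 < (\<Sum>i\<in>{..<n} - J. (x i)^2)"
proof -
  define u where "u = (\<lambda>i. if i \<in> J then x i else 0)"
  define v where "v = (\<lambda>i. if i \<in> J then 0 else x i)"
  have dec: "\<forall>i<n. x i = u i + v i" unfolding u_def v_def by auto
  have "{i. i < n \<and> u i \<noteq> 0} \<subseteq> J" unfolding u_def by auto
  then have "card {i. i < n \<and> u i \<noteq> 0} \<le> card J" using J by (intro card_mono) (auto intro: finite_subset)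
  then have su: "real (supp_card n u) \<le> \<alpha> * real n" using J unfolding supp_card_def by linarith
  have sph: "on_sphere n x" using inc unfolding incompressible_def by auto
  have "\<not> compressible n \<alpha> \<gamma> x" using inc unfolding incompressible_def by auto
  then have "\<not> vnorm n v \<le> \<gamma>" using dec su sph unfolding compressible_def by blast
  then have lt: "\<gamma> < sqrt (\<Sum>i<n. (v i)^2)" unfolding vnorm_def by simp
  have "(\<Sum>i<n. (v i)^2) = (\<Sum>i\<in>{..<n} - J. (x i)^2)"
  proof -
    have "(\<Sum>i<n. (v i)^2) = (\<Sum>i\<in>{..<n} - J. (v i)^2)"
      by (rule sum.mono_neutral_right) (auto simp: v_def)
    also have "\<dots> = (\<Sum>i\<in>{..<n} - J. (x i)^2)" by (rule sum.cong) (auto simp: v_def)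
    finally show ?thesis .
  qed
  then have "\<gamma> < sqrt (\<Sum>i\<in>{..<n} - J. (x i)^2)" using lt by simp
  then have "\<gamma>^2 < (sqrt (\<Sum>i\<in>{..<n} - J. (x i)^2))^2" using g by (intro power_strict_mono) auto
  also have "\<dots> = (\<Sum>i\<in>{..<n} - J. (x i)^2)" by (simp add: sum_nonneg)
  finally show ?thesis .
qed

lemma frac_small: assumes "\<bar>y\<bar> \<le> 1/2" shows "\<bar>frac_part y\<bar> = \<bar>y\<bar>"
proof (cases "y = 1/2")
  case True
  have "round y = 1" unfolding True round_def by simp
  then have "round (1/2::real) = 1" using True by simp
  then show ?thesis unfolding frac_part_def True by simp
next
  case False
  then have "-1/2 \<le> y" "y < 1/2" using assms by auto
  then have "round y = 0" unfolding round_def by (simp add: floor_eq_iff)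
  then show ?thesis unfolding frac_part_def by simp
qed

definition Gf :: "nat \<Rightarrow> nat \<Rightarrow> (nat \<Rightarrow> real) \<Rightarrow> real \<Rightarrow> real" where
  "Gf m n x \<tau> = (\<Prod>i<n. \<bar>psi m (\<tau> * x i)\<bar>)"

lemma Gf_nonneg: "0 \<le> Gf m n x \<tau>" unfolding Gf_def by (intro prod_nonneg) auto
lemma Gf_le1: "Gf m n x \<tau> \<le> 1" unfolding Gf_def by (intro prod_le_1) (auto simp: psi_abs_le1)

lemma psi_sq_bound: assumes "m \<ge> 1" "\<bar>y\<bar> \<le> 1/2" shows "(psi m y)^2 \<le> 1 / (1 + (real m * y)^2)"
proof -
  have "psi m y = psi m \<bar>frac_part y\<bar>" by (rule psi_frac)
  also have "\<bar>frac_part y\<bar> = \<bar>y\<bar>" using assms(2) by (rule frac_small)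
  finally have "psi m y = psi m \<bar>y\<bar>" .
  moreover have "(psi m \<bar>y\<bar>)^2 \<le> 1 / (1 + (real m * \<bar>y\<bar>)^2)" using assms by (intro psi_P5) auto
  moreover have "(real m * \<bar>y\<bar>)^2 = (real m * y)^2" by (simp add: power_mult_distrib)
  ultimately show ?thesis by simp
qed

lemma two_groups:
  fixes w :: "'a \<Rightarrow> real"
  assumes "finite A" "\<And>i. i \<in> A \<Longrightarrow> 0 \<le> w i" "0 < b" "3 * b < sum w A"
    "\<And>j. j \<in> A \<Longrightarrow> b \<le> w j \<Longrightarrow> b \<le> sum w (A - {j})"
  shows "\<exists>B1 B2. B1 \<subseteq> A \<and> B2 \<subseteq> A \<and> B1 \<inter> B2 = {} \<and> b \<le> sum w B1 \<and> b \<le> sum w B2"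
proof (cases "\<exists>j\<in>A. b \<le> w j")
  case True
  then obtain j where j: "j \<in> A" "b \<le> w j" by auto
  have "b \<le> sum w (A - {j})" using assms(5)[OF j] .
  moreover have "sum w {j} = w j" by simp
  ultimately have "{j} \<subseteq> A \<and> A - {j} \<subseteq> A \<and> {j} \<inter> (A - {j}) = {} \<and> b \<le> sum w {j} \<and> b \<le> sum w (A - {j})"
    using j by auto
  then show ?thesis by blast
next
  case False
  then have "\<And>i. i \<in> A \<Longrightarrow> 0 \<le> w i \<and> w i \<le> b" using assms by force
  then obtain B where B: "B \<subseteq> A" "b \<le> sum w B" "sum w B < 2 * b"
    using greedy_subset[of A w b] assms by force
  have "sum w (A - B) = sum w A - sum w B" using B assms by (simp add: sum_diff)
  then have "b \<le> sum w (A - B)" using B assms by linarith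
  then show ?thesis using B by (intro exI[of _ B] exI[of _ "A - B"]) auto
qed

lemma regionI:
  assumes m1: "m \<ge> 1" and a: "0 < \<alpha>" "\<alpha> < 1/2" "2 \<le> \<alpha> * real n" and g: "0 < \<gamma>"
    and inc: "incompressible n \<alpha> \<gamma> x" and t: "0 \<le> \<tau>" "\<tau> \<le> \<alpha> * sqrt (real n) / 2"
  shows "Gf m n x \<tau> \<le> 1 / (1 + (real m * \<tau> * \<gamma>)^2 / 3)"
proof -
  have sph: "on_sphere n x" using inc unfolding incompressible_def by auto
  have s1: "(\<Sum>i<n. (x i)^2) = 1" using sph by (rule sphere_sum)
  define J0 where "J0 = {i\<in>{..<n}. 1/2 < \<tau> * \<bar>x i\<bar>}"
  have J0sub: "J0 \<subseteq> {..<n}" unfolding J0_def by auto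
  have "real (card J0) * (1/4) = (\<Sum>i\<in>J0. 1/4)" by simp
  also have "\<dots> \<le> (\<Sum>i\<in>J0. (\<tau> * x i)^2)"
  proof (intro sum_mono)
    fix i assume "i \<in> J0"
    then have "1/2 \<le> \<bar>\<tau> * x i\<bar>" unfolding J0_def using t by (auto simp: abs_mult)
    then have "(1/2)^2 \<le> \<bar>\<tau> * x i\<bar>^2" by (intro power_mono) auto
    then show "1/4 \<le> (\<tau> * x i)^2" by (simp add: power2_eq_square)
  qed
  also have "\<dots> = \<tau>^2 * (\<Sum>i\<in>J0. (x i)^2)" by (simp add: power_mult_distrib sum_distrib_left)
  also have "\<dots> \<le> \<tau>^2 * 1"
  proof -
    have "(\<Sum>i\<in>J0. (x i)^2) \<le> (\<Sum>i<n. (x i)^2)" using J0sub by (intro sum_mono2) auto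
    then show ?thesis using s1 by (intro mult_left_mono) auto
  qed
  finally have cJ0: "real (card J0) \<le> 4 * \<tau>^2" by simp
  have "\<tau>^2 \<le> (\<alpha> * sqrt (real n) / 2)^2" using t by (intro power_mono) auto
  also have "\<dots> = \<alpha> * (\<alpha> * real n) / 4" by (simp add: power_mult_distrib power_divide power2_eq_square)
  also have "\<dots> \<le> (1/2) * (\<alpha> * real n) / 4" using a by (intro divide_right_mono mult_right_mono) auto
  finally have cJ0': "real (card J0) \<le> \<alpha> * real n / 2" using cJ0 by linarith
  define A where "A = {..<n} - J0"
  define b where "b = \<gamma>^2 / 3"
  have b0: "0 < b" unfolding b_def using g by simp
  have "\<gamma>^2 < sum (\<lambda>i. (x i)^2) A" unfolding A_def
    using incomp_mass[OF inc g J0sub] cJ0' a by linarith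
  then have big: "3 * b < sum (\<lambda>i. (x i)^2) A" unfolding b_def by simp
  have rem: "b \<le> sum (\<lambda>i. (x i)^2) (A - {j})" if j: "j \<in> A" for j
  proof -
    have finJ0: "finite J0" using J0sub by (rule finite_subset) simp
    have "card (insert j J0) \<le> card J0 + 1" using finJ0 by (simp add: card_insert_if)
    then have "real (card (insert j J0)) \<le> \<alpha> * real n" using cJ0' a by linarith
    moreover have "insert j J0 \<subseteq> {..<n}" using J0sub j unfolding A_def by auto
    ultimately have "\<gamma>^2 < sum (\<lambda>i. (x i)^2) ({..<n} - insert j J0)" using incomp_mass[OF inc g] by blast
    moreover have "{..<n} - insert j J0 = A - {j}" unfolding A_def by auto
    ultimately have "\<gamma>^2 < sum (\<lambda>i. (x i)^2) (A - {j})" by simp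
    then show ?thesis unfolding b_def using zero_le_power2[of \<gamma>] by linarith
  qed
  obtain B1 B2 where B: "B1 \<subseteq> A" "B2 \<subseteq> A" "B1 \<inter> B2 = {}" "b \<le> sum (\<lambda>i. (x i)^2) B1" "b \<le> sum (\<lambda>i. (x i)^2) B2"
    using two_groups[of A "\<lambda>i. (x i)^2" b] big rem b0 unfolding A_def by auto
  have finA: "finite A" unfolding A_def by auto
  define Q where "Q = (real m * \<tau> * \<gamma>)^2 / 3"
  have Q0: "0 \<le> Q" unfolding Q_def by simp
  have grp: "(\<Prod>i\<in>B. (psi m (\<tau> * x i))^2) \<le> 1 / (1 + Q)" if BA: "B \<subseteq> A" and Bb: "b \<le> sum (\<lambda>i. (x i)^2) B" for B
  proof -
    have finB: "finite B" using finA BA by (rule finite_subset[rotated])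
    have "(\<Prod>i\<in>B. (psi m (\<tau> * x i))^2) \<le> (\<Prod>i\<in>B. 1 / (1 + (real m * (\<tau> * x i))^2))"
    proof (intro prod_mono conjI)
      fix i assume "i \<in> B"
      then have "i \<notin> J0" using BA unfolding A_def by auto
      then have "\<bar>\<tau> * x i\<bar> \<le> 1/2" using BA \<open>i \<in> B\<close> t unfolding J0_def A_def by (auto simp: abs_mult)
      then show "(psi m (\<tau> * x i))^2 \<le> 1 / (1 + (real m * (\<tau> * x i))^2)" using m1 by (rule psi_sq_bound[rotated])
    qed auto
    also have "\<dots> = 1 / (\<Prod>i\<in>B. 1 + (real m * (\<tau> * x i))^2)" by (simp add: prod_dividef)
    also have "\<dots> \<le> 1 / (1 + (\<Sum>i\<in>B. (real m * (\<tau> * x i))^2))"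
    proof -
      let ?S = "(\<Sum>i\<in>B. (real m * (\<tau> * x i))^2)"
      let ?P = "(\<Prod>i\<in>B. 1 + (real m * (\<tau> * x i))^2)"
      have h: "1 + ?S \<le> ?P" using prod_one_plus[OF finB, of "\<lambda>i. (real m * (\<tau> * x i))^2"] by simp
      have "0 \<le> ?S" by (intro sum_nonneg) auto
      then have "0 < 1 + ?S" by linarith
      then show ?thesis using h by (intro divide_left_mono) (auto intro: mult_pos_pos)
    qed
    also have "(\<Sum>i\<in>B. (real m * (\<tau> * x i))^2) = (real m * \<tau>)^2 * sum (\<lambda>i. (x i)^2) B"
    proof -
      have "\<And>i. (real m * (\<tau> * x i))^2 = (real m * \<tau>)^2 * (x i)^2" by (simp add: power_mult_distrib)
      then show ?thesis by (simp add: sum_distrib_left)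
    qed
    also have "1 / (1 + (real m * \<tau>)^2 * sum (\<lambda>i. (x i)^2) B) \<le> 1 / (1 + Q)"
    proof -
      have "(real m * \<tau>)^2 * b \<le> (real m * \<tau>)^2 * sum (\<lambda>i. (x i)^2) B" using Bb by (intro mult_left_mono) auto
      moreover have "Q = (real m * \<tau>)^2 * b" unfolding Q_def b_def by (simp add: power_mult_distrib)
      ultimately show ?thesis using Q0 by (intro divide_left_mono) (auto intro: add_pos_nonneg)
    qed
    finally show ?thesis .
  qed
  have "(Gf m n x \<tau>)^2 = (\<Prod>i<n. (psi m (\<tau> * x i))^2)" unfolding Gf_def prod_power_distrib by simp
  also have "\<dots> \<le> (\<Prod>i\<in>B1 \<union> B2. (psi m (\<tau> * x i))^2)"
  proof (rule prod_subset_le)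
    show "B1 \<union> B2 \<subseteq> {..<n}" using B unfolding A_def by auto
    fix i show "0 \<le> (psi m (\<tau> * x i))^2 \<and> (psi m (\<tau> * x i))^2 \<le> 1"
    proof -
      have "\<bar>psi m (\<tau> * x i)\<bar>^2 \<le> 1^2" using psi_abs_le1[of m "\<tau> * x i"] by (intro power_mono) auto
      then show ?thesis by simp
    qed
  qed simp
  also have "\<dots> = (\<Prod>i\<in>B1. (psi m (\<tau> * x i))^2) * (\<Prod>i\<in>B2. (psi m (\<tau> * x i))^2)"
    using B finA by (intro prod.union_disjoint) (auto intro: finite_subset)
  also have "\<dots> \<le> (1 / (1 + Q)) * (1 / (1 + Q))"
    using grp[OF B(1,4)] grp[OF B(2,5)] Q0 by (intro mult_mono) (auto intro: prod_nonneg)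
  also have "\<dots> = (1 / (1 + Q))^2" by (simp add: power2_eq_square)
  finally have "(Gf m n x \<tau>)^2 \<le> (1 / (1 + Q))^2" .
  moreover have "0 \<le> 1 / (1 + Q)" using Q0 by simp
  ultimately have "Gf m n x \<tau> \<le> 1 / (1 + Q)" by (rule power2_le_imp_le)
  then show ?thesis unfolding Q_def .
qed

lemma lcd_not_below:
  assumes "0 < \<tau>" "ereal \<tau> < LCD n \<alpha> \<beta> x"
  shows "\<not> (\<exists>u v. (\<forall>i<n. frac_part (\<tau> * x i) = u i + v i) \<and> real (supp_card n u) \<le> \<alpha> * real n
        \<and> vnorm n v \<le> \<beta> * min \<tau> (sqrt (real n)))"
proof
  assume h: "\<exists>u v. (\<forall>i<n. frac_part (\<tau> * x i) = u i + v i) \<and> real (supp_card n u) \<le> \<alpha> * real n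
        \<and> vnorm n v \<le> \<beta> * min \<tau> (sqrt (real n))"
  then have "ereal \<tau> \<in> ereal ` {D. D > 0 \<and>
     (\<exists>u v. (\<forall>i<n. frac_part (D * x i) = u i + v i) \<and> real (supp_card n u) \<le> \<alpha> * real n
        \<and> vnorm n v \<le> \<beta> * min D (sqrt (real n)))}" using assms by blast
  then have "LCD n \<alpha> \<beta> x \<le> ereal \<tau>" unfolding LCD_def by (rule Inf_lower)
  then show False using assms by simp
qed

lemma regionII:
  assumes m1: "m \<ge> 1" and a: "0 < \<alpha>" "\<alpha> < 1/2" "0 < \<beta>" and n1: "n \<ge> 1"
    and t: "\<alpha> * sqrt (real n) / 2 \<le> \<tau>" and lcd: "ereal \<tau> < LCD n \<alpha> \<beta> x"
  shows "Gf m n x \<tau> \<le> 1 / ((\<alpha> * \<beta> * real m) powr (\<alpha> * real n))"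
proof -
  have sn: "0 < sqrt (real n)" using n1 by simp
  have t0: "0 < \<tau>" using t a sn by (smt (verit) divide_pos_pos mult_pos_pos)
  define s where "s = \<beta> * min \<tau> (sqrt (real n)) / sqrt (real n)"
  have mn: "\<alpha> * sqrt (real n) / 2 \<le> min \<tau> (sqrt (real n))" using t a sn by auto
  have "\<beta> * (\<alpha> * sqrt (real n) / 2) / sqrt (real n) \<le> s" unfolding s_def using mn a sn
    by (intro divide_right_mono mult_left_mono) auto
  then have s_ge: "\<alpha> * \<beta> / 2 \<le> s" using sn by (simp add: field_simps)
  have s0: "0 < s" using s_ge a by (smt (verit) divide_pos_pos mult_pos_pos)
  define f where "f = (\<lambda>i. frac_part (\<tau> * x i))"
  define J where "J = {i\<in>{..<n}. s \<le> \<bar>f i\<bar>}"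
  have Jsub: "J \<subseteq> {..<n}" unfolding J_def by auto
  have finJ: "finite J" using Jsub by (rule finite_subset) simp
  have cardJ: "\<alpha> * real n < real (card J)"
  proof (rule ccontr)
    assume "\<not> \<alpha> * real n < real (card J)"
    then have cJ: "real (card J) \<le> \<alpha> * real n" by simp
    define u where "u = (\<lambda>i. if i \<in> J then f i else 0)"
    define v where "v = (\<lambda>i. if i \<in> J then 0 else f i)"
    have dec: "\<forall>i<n. frac_part (\<tau> * x i) = u i + v i" unfolding u_def v_def f_def by auto
    have "{i. i < n \<and> u i \<noteq> 0} \<subseteq> J" unfolding u_def by auto
    then have "card {i. i < n \<and> u i \<noteq> 0} \<le> card J" using finJ by (intro card_mono) auto
    then have su: "real (supp_card n u) \<le> \<alpha> * real n" using cJ unfolding supp_card_def by linarith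
    have "(\<Sum>i<n. (v i)^2) \<le> (\<Sum>i<n. s^2)"
    proof (intro sum_mono)
      fix i assume i: "i \<in> {..<n}"
      show "(v i)^2 \<le> s^2"
      proof (cases "i \<in> J")
        case True then show ?thesis unfolding v_def by simp
      next
        case False
        then have "\<bar>f i\<bar> < s" using i unfolding J_def by auto
        then have "\<bar>f i\<bar>^2 \<le> s^2" by (intro power_mono) auto
        then show ?thesis using False unfolding v_def by simp
      qed
    qed
    then have "vnorm n v \<le> sqrt (real n * s^2)" unfolding vnorm_def by simp
    also have "\<dots> = sqrt (real n) * s" using s0 by (simp add: real_sqrt_mult)
    also have "\<dots> = \<beta> * min \<tau> (sqrt (real n))" unfolding s_def using sn by simp
    finally have "vnorm n v \<le> \<beta> * min \<tau> (sqrt (real n))" .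
    then show False using lcd_not_below[OF t0 lcd] dec su by blast
  qed
  define c where "c = 2 / (7 * real m * s)"
  have c0: "0 < c" unfolding c_def using s0 m1 by simp
  have "Gf m n x \<tau> \<le> (\<Prod>i\<in>J. \<bar>psi m (\<tau> * x i)\<bar>)" unfolding Gf_def
    using Jsub by (intro prod_subset_le) (auto simp: psi_abs_le1)
  also have "\<dots> \<le> (\<Prod>i\<in>J. c)"
  proof (intro prod_mono conjI)
    fix i assume i: "i \<in> J"
    have fi: "s \<le> \<bar>f i\<bar>" using i unfolding J_def by auto
    have "psi m (\<tau> * x i) = psi m \<bar>f i\<bar>" unfolding f_def by (rule psi_frac)
    also have "\<bar>psi m \<bar>f i\<bar>\<bar> \<le> 2 / (7 * real m * \<bar>f i\<bar>)"
      using m1 fi s0 frac_abs_le[of "\<tau> * x i"] unfolding f_def by (intro psi_P2) auto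
    also have "\<dots> \<le> c" unfolding c_def using fi s0 m1 by (intro divide_left_mono mult_left_mono) auto
    finally show "\<bar>psi m (\<tau> * x i)\<bar> \<le> c" .
  qed auto
  also have "\<dots> = c ^ card J" by simp
  finally have G: "Gf m n x \<tau> \<le> c ^ card J" .
  define q where "q = \<alpha> * \<beta> * real m"
  have q0: "0 < q" unfolding q_def using a m1 by simp
  have an: "0 \<le> \<alpha> * real n" using a by simp
  show ?thesis
  proof (cases "q \<le> 1")
    case True
    have "q powr (\<alpha> * real n) \<le> 1" using True q0 an by (intro powr_le1) auto
    moreover have "0 < q powr (\<alpha> * real n)" using q0 by simp
    ultimately have "1 \<le> 1 / q powr (\<alpha> * real n)" by simp
    then show ?thesis using Gf_le1[of m n x \<tau>] unfolding q_def by linarith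
  next
    case False
    have "7 * real m * (\<alpha> * \<beta> / 2) \<le> 7 * real m * s" using s_ge m1 by (intro mult_left_mono) auto
    moreover have p1: "0 < 7 * real m * (\<alpha> * \<beta> / 2)" using a m1 by simp
    moreover have p2: "0 < 7 * real m * s" using s0 m1 by simp
    ultimately have "c \<le> 2 / (7 * real m * (\<alpha> * \<beta> / 2))" unfolding c_def
      by (intro frac_le) auto
    also have "\<dots> = (4/7) / q" unfolding q_def by (simp add: field_simps)
    finally have cq: "c \<le> (4/7) / q" .
    have "(4/7) / q \<le> 1 / q" using q0 by (intro divide_right_mono) auto
    then have cq1: "c \<le> 1 / q" using cq by linarith
    have c1: "c \<le> 1" using cq1 False q0 by (smt (verit) divide_le_eq_1)
    have "c ^ card J = c powr (real (card J))" using c0 by (simp add: powr_realpow)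
    also have "\<dots> \<le> c powr (\<alpha> * real n)" using cardJ c0 c1 by (intro powr_mono') auto
    also have "\<dots> \<le> (1 / q) powr (\<alpha> * real n)" using cq1 c0 an by (intro powr_mono2) auto
    also have "\<dots> = 1 / q powr (\<alpha> * real n)" using q0 by (simp add: powr_divide)
    finally show ?thesis using G unfolding q_def by linarith
  qed
qed

definition Vset :: "nat \<Rightarrow> real set" where
  "Vset m = {real_of_int a / real m | a. a \<in> {- int m..int m}}"

lemma Vset_image: "Vset m = (\<lambda>b. real_of_int b / real m) ` {- int m..int m}"
  unfolding Vset_def by auto

lemma Vset_inj: "m \<ge> 1 \<Longrightarrow> inj_on (\<lambda>b. real_of_int b / real m) {- int m..int m}"
  by (auto simp: inj_on_def)

lemma Vset_sum: "m \<ge> 1 \<Longrightarrow> (\<Sum>a\<in>Vset m. f a) = (\<Sum>b\<in>{- int m..int m}. f (real_of_int b / real m))"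
  unfolding Vset_image by (subst sum.reindex) (auto simp: Vset_inj)

lemma Vset_finite: "finite (Vset m)" unfolding Vset_image by simp

lemma Vset_card: "m \<ge> 1 \<Longrightarrow> card (Vset m) = 2 * m + 1"
  unfolding Vset_image by (subst card_image) (auto simp: Vset_inj)

lemma sin_sum_sym: fixes c :: real shows "(\<Sum>b\<in>{- int m..int m}. sin (c * of_int b)) = 0"
proof -
  have "(\<Sum>b\<in>{- int m..int m}. sin (c * of_int b)) = (\<Sum>b\<in>uminus ` {- int m..int m}. sin (c * of_int b))"
  proof -
    have "uminus ` {- int m..int m} = {- int m..int m}" by (auto simp: image_iff intro!: bexI[of _ "- _"])
    then show ?thesis by simp
  qed
  also have "\<dots> = (\<Sum>b\<in>{- int m..int m}. sin (c * of_int (- b)))"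
    by (subst sum.reindex) (auto simp: inj_on_def)
  also have "\<dots> = - (\<Sum>b\<in>{- int m..int m}. sin (c * of_int b))"
    by (simp add: sum_negf[symmetric])
  finally show ?thesis by linarith
qed

lemma cis_sum_sym: fixes c :: real shows "(\<Sum>b\<in>{- int m..int m}. cis (c * of_int b)) = complex_of_real (\<Sum>b\<in>{- int m..int m}. cos (c * of_int b))"
  by (rule complex_eqI) (simp_all add: sin_sum_sym)

lemma cis_sum: "cis (\<Sum>i\<in>I. f i) = (\<Prod>i\<in>I. cis (f i))" if "finite I"
  using that by (induction I rule: finite_induct) (simp_all add: cis_mult[symmetric])

lemma Dn_prob:
  assumes "m \<ge> 1"
  shows "measure_pmf.prob (Dn m n) E = real (card (PiE {..<n} (\<lambda>_. Vset m) \<inter> E)) / real (card (PiE {..<n} (\<lambda>_. Vset m)))"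
proof -
  have eq: "Dn m n = pmf_of_set (PiE {..<n} (\<lambda>_. Vset m))" unfolding Dn_def Vset_def by simp
  have ne: "PiE {..<n} (\<lambda>_. Vset m) \<noteq> {}"
  proof -
    have "0 \<in> Vset m" unfolding Vset_def by (rule CollectI, rule exI[of _ 0]) auto
    then show ?thesis by (auto simp: PiE_eq_empty_iff)
  qed
  have fin: "finite (PiE {..<n} (\<lambda>_. Vset m))" by (intro finite_PiE) (auto simp: Vset_finite)
  show ?thesis unfolding eq using measure_pmf_of_set[OF ne fin] by simp
qed

lemma card_A: "m \<ge> 1 \<Longrightarrow> card (PiE {..<n} (\<lambda>_. Vset m)) = (2 * m + 1) ^ n"
  by (simp add: card_PiE Vset_card)

lemma fourier:
  assumes m1: "m \<ge> 1"
  shows "(\<Sum>X\<in>PiE {..<n} (\<lambda>_. Vset m). cos (t * (\<Sum>i<n. X i * x i)))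
         \<le> (2 * real m + 1) ^ n * Gf m n x (t / (2 * pi * real m))"
proof -
  let ?A = "PiE {..<n} (\<lambda>_. Vset m)"
  let ?p = "\<lambda>i. psi m (t / (2 * pi * real m) * x i)"
  have fin: "finite ?A" by (intro finite_PiE) (auto simp: Vset_finite)
  have "(\<Sum>X\<in>?A. cos (t * (\<Sum>i<n. X i * x i))) = Re (\<Sum>X\<in>?A. cis (t * (\<Sum>i<n. X i * x i)))" by simp
  also have "(\<Sum>X\<in>?A. cis (t * (\<Sum>i<n. X i * x i))) = (\<Sum>X\<in>?A. \<Prod>i<n. cis (t * x i * X i))"
    by (intro sum.cong refl) (simp add: sum_distrib_left cis_sum mult.commute mult.left_commute)
  also have "\<dots> = (\<Prod>i<n. \<Sum>a\<in>Vset m. cis (t * x i * a))"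
    by (rule prod_sum_PiE[symmetric]) (auto simp: Vset_finite)
  also have "\<dots> = (\<Prod>i<n. complex_of_real ((2 * real m + 1) * ?p i))"
  proof (intro prod.cong refl)
    fix i
    have "(\<Sum>a\<in>Vset m. cis (t * x i * a)) = (\<Sum>b\<in>{- int m..int m}. cis (t * x i / real m * of_int b))"
      using m1 by (simp add: Vset_sum)
    also have "\<dots> = complex_of_real (\<Sum>b\<in>{- int m..int m}. cos (t * x i / real m * of_int b))"
      by (rule cis_sum_sym)
    also have "(\<Sum>b\<in>{- int m..int m}. cos (t * x i / real m * of_int b)) = (2 * real m + 1) * ?p i"
    proof -
      have "\<And>b. 2 * pi * (t / (2 * pi * real m) * x i) * of_int b = t * x i / real m * of_int b"
        using m1 by (simp add: field_simps)
      then show ?thesis unfolding psi_def by simp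
    qed
    finally show "(\<Sum>a\<in>Vset m. cis (t * x i * a)) = complex_of_real ((2 * real m + 1) * ?p i)" .
  qed
  also have "\<dots> = complex_of_real (\<Prod>i<n. (2 * real m + 1) * ?p i)" by (rule of_real_prod[symmetric])
  finally have "(\<Sum>X\<in>?A. cos (t * (\<Sum>i<n. X i * x i))) = Re (complex_of_real (\<Prod>i<n. (2 * real m + 1) * ?p i))" .
  then have "(\<Sum>X\<in>?A. cos (t * (\<Sum>i<n. X i * x i))) = (\<Prod>i<n. (2 * real m + 1) * ?p i)" by (simp only: Re_complex_of_real)
  also have "\<dots> \<le> \<bar>\<Prod>i<n. (2 * real m + 1) * ?p i\<bar>" by simp
  also have "\<dots> = (\<Prod>i<n. (2 * real m + 1) * \<bar>?p i\<bar>)" by (simp add: abs_prod abs_mult)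
  also have "\<dots> = (2 * real m + 1) ^ n * Gf m n x (t / (2 * pi * real m))"
    unfolding Gf_def by (simp add: prod.distrib)
  finally show ?thesis .
qed

lemma fejer_id: fixes y :: real
  shows "(\<Sum>j<N. cos (real j * y))^2 + (\<Sum>j<N. sin (real j * y))^2 = (\<Sum>j<N. \<Sum>l<N. cos ((real j - real l) * y))"
proof -
  have "(\<Sum>j<N. cos (real j * y))^2 + (\<Sum>j<N. sin (real j * y))^2
      = (\<Sum>j<N. \<Sum>l<N. cos (real j * y) * cos (real l * y)) + (\<Sum>j<N. \<Sum>l<N. sin (real j * y) * sin (real l * y))"
    by (simp add: power2_eq_square sum_product)
  also have "\<dots> = (\<Sum>j<N. \<Sum>l<N. cos (real j * y) * cos (real l * y) + sin (real j * y) * sin (real l * y))"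
    by (simp add: sum.distrib)
  also have "\<dots> = (\<Sum>j<N. \<Sum>l<N. cos ((real j - real l) * y))"
    by (simp add: cos_diff left_diff_distrib)
  finally show ?thesis .
qed

lemma cos_ge_half: fixes z :: real assumes "\<bar>z\<bar> \<le> 1" shows "1/2 \<le> cos z"
proof -
  have pi3: "3 \<le> pi" using pi_approx by simp
  have "cos (pi/3) \<le> cos \<bar>z\<bar>" using assms pi3 by (subst cos_mono_le_eq) auto
  then show ?thesis by (simp add: cos_60)
qed

lemma kernel_lower: fixes y :: real assumes "N \<ge> 1" "\<bar>y\<bar> * (real N - 1) \<le> 1"
  shows "real N ^ 2 / 4 \<le> (\<Sum>j<N. \<Sum>l<N. cos ((real j - real l) * y))"
proof -
  have "(\<Sum>j<N. (1::real)/2) \<le> (\<Sum>j<N. cos (real j * y))"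
  proof (intro sum_mono cos_ge_half)
    fix j assume "j \<in> {..<N}"
    then have "real j \<le> real N - 1" by auto
    then have "\<bar>y\<bar> * real j \<le> \<bar>y\<bar> * (real N - 1)" by (intro mult_left_mono) auto
    then show "\<bar>real j * y\<bar> \<le> 1" using assms by (simp add: abs_mult mult.commute)
  qed
  then have h: "real N / 2 \<le> (\<Sum>j<N. cos (real j * y))" by simp
  have "(real N / 2)^2 \<le> (\<Sum>j<N. cos (real j * y))^2" using h by (intro power_mono) auto
  also have "\<dots> \<le> (\<Sum>j<N. cos (real j * y))^2 + (\<Sum>j<N. sin (real j * y))^2" by simp
  finally show ?thesis by (simp add: fejer_id power_divide)
qed

lemma kernel_nonneg: fixes y :: real shows "0 \<le> (\<Sum>j<N. \<Sum>l<N. cos ((real j - real l) * y))"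
  by (simp add: fejer_id[symmetric])

lemma prob_bound:
  assumes m1: "m \<ge> 1" and N1: "N \<ge> 1" and h: "0 < h" and e: "(real N - 1) * h * \<epsilon> \<le> 1"
  shows "measure_pmf.prob (Dn m n) {X. \<bar>\<Sum>i<n. X i * x i\<bar> \<le> \<epsilon>}
     \<le> 4 / real N ^ 2 * (\<Sum>j<N. \<Sum>l<N. Gf m n x ((real j - real l) * h / (2 * pi * real m)))"
proof -
  let ?A = "PiE {..<n} (\<lambda>_. Vset m)"
  let ?E = "{X. \<bar>\<Sum>i<n. X i * x i\<bar> \<le> \<epsilon>}"
  let ?S = "\<lambda>X. (\<Sum>i<n. X i * x i)"
  let ?F = "\<lambda>y. (\<Sum>j<N. \<Sum>l<N. cos ((real j - real l) * y))"
  have fin: "finite ?A" by (intro finite_PiE) (auto simp: Vset_finite)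
  have cA: "real (card ?A) = (2 * real m + 1) ^ n" using m1 by (simp add: card_A add.commute)
  have cApos: "0 < real (card ?A)" unfolding cA by simp
  have "real (card (?A \<inter> ?E)) * (real N ^ 2 / 4) = (\<Sum>X\<in>?A \<inter> ?E. real N ^ 2 / 4)" by simp
  also have "\<dots> \<le> (\<Sum>X\<in>?A \<inter> ?E. ?F (h * ?S X))"
  proof (intro sum_mono kernel_lower[OF N1])
    fix X assume "X \<in> ?A \<inter> ?E"
    then have "\<bar>?S X\<bar> \<le> \<epsilon>" by auto
    then have "\<bar>h * ?S X\<bar> * (real N - 1) \<le> h * \<epsilon> * (real N - 1)" using h N1
      by (simp add: abs_mult) (intro mult_right_mono mult_left_mono, auto)
    then show "\<bar>h * ?S X\<bar> * (real N - 1) \<le> 1" using e by (simp add: algebra_simps)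
  qed
  also have "\<dots> \<le> (\<Sum>X\<in>?A. ?F (h * ?S X))" using fin by (intro sum_mono2) (auto simp: kernel_nonneg)
  also have "\<dots> = (\<Sum>j<N. \<Sum>l<N. \<Sum>X\<in>?A. cos (((real j - real l) * h) * ?S X))"
    by (subst sum.swap, subst (2) sum.swap) (simp add: mult.assoc)
  also have "\<dots> \<le> (\<Sum>j<N. \<Sum>l<N. (2 * real m + 1) ^ n * Gf m n x ((real j - real l) * h / (2 * pi * real m)))"
    using m1 by (intro sum_mono fourier) auto
  also have "\<dots> = real (card ?A) * (\<Sum>j<N. \<Sum>l<N. Gf m n x ((real j - real l) * h / (2 * pi * real m)))"
    unfolding cA by (simp add: sum_distrib_left)
  finally have *: "real (card (?A \<inter> ?E)) * (real N ^ 2 / 4) \<le> real (card ?A) * (\<Sum>j<N. \<Sum>l<N. Gf m n x ((real j - real l) * h / (2 * pi * real m)))" .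
  have "measure_pmf.prob (Dn m n) ?E = real (card (?A \<inter> ?E)) / real (card ?A)" using m1 by (rule Dn_prob)
  also have "\<dots> \<le> 4 / real N ^ 2 * (\<Sum>j<N. \<Sum>l<N. Gf m n x ((real j - real l) * h / (2 * pi * real m)))"
    using * cApos N1 by (simp add: field_simps)
  finally show ?thesis .
qed

lemma sum_inv_sq: "(\<Sum>k\<in>{-int M..int M}. 1 / (1 + (real_of_int k)^2)) \<le> 5 - 4 / (real M + 1)"
proof (induction M)
  case 0 then show ?case by simp
next
  case (Suc M)
  have e: "{-int (Suc M)..int (Suc M)} = insert (int M + 1) (insert (-(int M + 1)) {-int M..int M})" by auto
  have "(\<Sum>k\<in>{-int (Suc M)..int (Suc M)}. 1 / (1 + (real_of_int k)^2))
      = 1 / (1 + (real M + 1)^2) + (1 / (1 + (real M + 1)^2) + (\<Sum>k\<in>{-int M..int M}. 1 / (1 + (real_of_int k)^2)))"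
    unfolding e by (simp add: sum.insert power2_eq_square algebra_simps)
  also have "\<dots> \<le> 2 / (1 + (real M + 1)^2) + (5 - 4 / (real M + 1))" using Suc by simp
  also have "\<dots> \<le> 5 - 4 / (real (Suc M) + 1)"
  proof -
    let ?a = "real M + 1"
    have a1: "1 \<le> ?a" by simp
    have ineq: "2 * (?a * (?a + 1)) \<le> 4 * (1 + ?a^2)" using a1 by (simp add: power2_eq_square algebra_simps)
    have p1: "0 < 1 + ?a^2" by (simp add: add_pos_nonneg)
    have p2: "0 < ?a * (?a + 1)" by simp
    have "2 / (1 + ?a^2) = ((?a * (?a + 1)) * 2) / ((?a * (?a + 1)) * (1 + ?a^2))"
      using p2 by (subst nonzero_mult_divide_mult_cancel_left) auto
    also have "\<dots> \<le> ((1 + ?a^2) * 4) / ((?a * (?a + 1)) * (1 + ?a^2))"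
      using ineq p1 p2 by (intro divide_right_mono) (auto simp: mult.commute)
    also have "\<dots> = 4 / (?a * (?a + 1))" using p1 
      by (subst mult.commute[of "?a * (?a + 1)"], subst nonzero_mult_divide_mult_cancel_left) auto
    also have "4 / (?a * (?a + 1)) = 4 / ?a - 4 / (?a + 1)" using a1 by (simp add: field_simps)
    finally show ?thesis by simp
  qed
  finally show ?case .
qed

lemma row_bound: assumes "j < N" shows "(\<Sum>l<N. 1 / (1 + (real j - real l)^2)) \<le> 5"
proof -
  let ?g = "\<lambda>k::int. 1 / (1 + (real_of_int k)^2)"
  have "(\<Sum>l<N. 1 / (1 + (real j - real l)^2)) = (\<Sum>l<N. ?g (int j - int l))" by simp
  also have "\<dots> = (\<Sum>k\<in>(\<lambda>l. int j - int l) ` {..<N}. ?g k)"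
    by (subst sum.reindex) (auto simp: inj_on_def)
  also have "\<dots> \<le> (\<Sum>k\<in>{-int N..int N}. ?g k)"
  proof (rule sum_mono2)
    show "(\<lambda>l. int j - int l) ` {..<N} \<subseteq> {-int N..int N}" using assms by auto
    fix k show "0 \<le> ?g k" by (simp add: add_pos_nonneg)
  qed simp
  also have "\<dots> \<le> 5 - 4 / (real N + 1)" by (rule sum_inv_sq)
  also have "\<dots> \<le> 5" by simp
  finally show ?thesis .
qed

lemma double_sum:
  assumes "\<And>j l. j < N \<Longrightarrow> l < N \<Longrightarrow> G j l \<le> 1 / (1 + (real j - real l)^2) + Q"
  shows "(\<Sum>j<N. \<Sum>l<N. G j l) \<le> 5 * real N + real N ^ 2 * Q"
proof -
  have "(\<Sum>j<N. \<Sum>l<N. G j l) \<le> (\<Sum>j<N. \<Sum>l<N. 1 / (1 + (real j - real l)^2) + Q)"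
    using assms by (intro sum_mono) auto
  also have "\<dots> = (\<Sum>j<N. (\<Sum>l<N. 1 / (1 + (real j - real l)^2)) + real N * Q)"
    by (simp add: sum.distrib)
  also have "\<dots> \<le> (\<Sum>j<N. 5 + real N * Q)"
    using row_bound by (intro sum_mono) auto
  also have "\<dots> = 5 * real N + real N ^ 2 * Q" by (simp add: power2_eq_square algebra_simps)
  finally show ?thesis .
qed

lemma Gf_minus: "Gf m n x (- \<tau>) = Gf m n x \<tau>"
  unfolding Gf_def using psi_minus by (metis mult_minus_left)

lemma G_total:
  assumes m1: "m \<ge> 1" and n1: "n \<ge> 1" and a: "0 < \<alpha>" "\<alpha> < 1/2" "2 \<le> \<alpha> * real n" and b: "0 < \<beta>"
    and g: "0 < \<gamma>" and inc: "incompressible n \<alpha> \<gamma> x" and hd: "h = 4 * pi / \<gamma>"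
    and lt: "k = 0 \<or> ereal (\<bar>k\<bar> * h / (2 * pi * real m)) < LCD n \<alpha> \<beta> x"
  shows "Gf m n x (k * h / (2 * pi * real m)) \<le> 1 / (1 + k^2) + 1 / ((\<alpha> * \<beta> * real m) powr (\<alpha> * real n))"
proof -
  let ?Q = "1 / ((\<alpha> * \<beta> * real m) powr (\<alpha> * real n))"
  have Q0: "0 \<le> ?Q" by simp
  define \<tau> where "\<tau> = \<bar>k\<bar> * h / (2 * pi * real m)"
  have tg: "\<tau> = 2 * \<bar>k\<bar> / (real m * \<gamma>)" unfolding \<tau>_def hd using m1 g by (simp add: field_simps)
  have t0: "0 \<le> \<tau>" unfolding tg using g m1 by simp
  have mtg: "real m * \<tau> * \<gamma> = 2 * \<bar>k\<bar>" unfolding tg using g m1 by (simp add: field_simps)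
  have eq: "Gf m n x (k * h / (2 * pi * real m)) = Gf m n x \<tau>"
  proof (cases "0 \<le> k")
    case True then show ?thesis unfolding \<tau>_def by simp
  next
    case False
    then have "k * h / (2 * pi * real m) = - \<tau>" unfolding \<tau>_def by simp
    then show ?thesis by (simp add: Gf_minus)
  qed
  show ?thesis
  proof (cases "\<tau> \<le> \<alpha> * sqrt (real n) / 2")
    case True
    have "Gf m n x \<tau> \<le> 1 / (1 + (real m * \<tau> * \<gamma>)^2 / 3)"
      using regionI[OF m1 a g inc t0 True] .
    also have "\<dots> = 1 / (1 + 4 * k^2 / 3)" unfolding mtg by (simp add: power_mult_distrib)
    also have "\<dots> \<le> 1 / (1 + k^2)"
    proof -
      have p1: "0 < 1 + k^2" by (simp add: add_pos_nonneg)
      have p2: "0 < 1 + 4 * k^2 / 3" by (simp add: add_pos_nonneg)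
      have "1 + k^2 \<le> 1 + 4 * k^2 / 3" by simp
      then show ?thesis using p1 p2 by (intro divide_left_mono) auto
    qed
    finally show ?thesis using eq Q0 by linarith
  next
    case False
    then have "\<alpha> * sqrt (real n) / 2 \<le> \<tau>" by simp
    moreover have "0 < \<alpha> * sqrt (real n) / 2" using a n1 by simp
    then have "0 < \<tau>" using False by linarith
    then have "k \<noteq> 0" unfolding \<tau>_def by auto
    then have "ereal \<tau> < LCD n \<alpha> \<beta> x" using lt unfolding \<tau>_def by simp
    ultimately have "Gf m n x \<tau> \<le> ?Q" using regionII[OF m1 a(1,2) b n1] by blast
    moreover have "0 < 1 + k^2" by (simp add: add_pos_nonneg)
    then have "0 \<le> 1 / (1 + k^2)" by simp
    ultimately show ?thesis using eq by linarith
  qed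
qed

lemma final_N:
  assumes m1: "m \<ge> 1" and n1: "n \<ge> 1" and a: "0 < \<alpha>" "\<alpha> < 1/2" "2 \<le> \<alpha> * real n" and b: "0 < \<beta>"
    and g: "0 < \<gamma>" and inc: "incompressible n \<alpha> \<gamma> x" and N1: "N \<ge> 1"
    and e: "(real N - 1) * (4 * pi / \<gamma>) * \<epsilon> \<le> 1"
    and lcd: "\<And>\<tau>. 0 < \<tau> \<Longrightarrow> \<tau> \<le> (real N - 1) * (4 * pi / \<gamma>) / (2 * pi * real m) \<Longrightarrow> ereal \<tau> < LCD n \<alpha> \<beta> x"
  shows "measure_pmf.prob (Dn m n) {X. \<bar>\<Sum>i<n. X i * x i\<bar> \<le> \<epsilon>}
       \<le> 20 / real N + 4 * (1 / ((\<alpha> * \<beta> * real m) powr (\<alpha> * real n)))"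
proof -
  define h where "h = 4 * pi / \<gamma>"
  define Q where "Q = 1 / ((\<alpha> * \<beta> * real m) powr (\<alpha> * real n))"
  have h0: "0 < h" unfolding h_def using g by simp
  have Q0: "0 \<le> Q" unfolding Q_def by simp
  have "measure_pmf.prob (Dn m n) {X. \<bar>\<Sum>i<n. X i * x i\<bar> \<le> \<epsilon>}
     \<le> 4 / real N ^ 2 * (\<Sum>j<N. \<Sum>l<N. Gf m n x ((real j - real l) * h / (2 * pi * real m)))"
    using prob_bound[OF m1 N1 h0] e unfolding h_def by simp
  also have "\<dots> \<le> 4 / real N ^ 2 * (5 * real N + real N ^ 2 * Q)"
  proof (intro mult_left_mono double_sum)
    fix j l assume jl: "j < N" "l < N"
    let ?k = "real j - real l"
    have "?k = 0 \<or> ereal (\<bar>?k\<bar> * h / (2 * pi * real m)) < LCD n \<alpha> \<beta> x"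
    proof (cases "?k = 0")
      case False
      have pm: "0 < 2 * pi * real m" using m1 by simp
      have "0 < \<bar>?k\<bar> * h / (2 * pi * real m)" using False h0 pm by simp
      moreover have "\<bar>?k\<bar> \<le> real N - 1" using jl by auto
      then have "\<bar>?k\<bar> * h / (2 * pi * real m) \<le> (real N - 1) * (4 * pi / \<gamma>) / (2 * pi * real m)"
        using h0 pm unfolding h_def by (intro divide_right_mono mult_right_mono) auto
      ultimately show ?thesis using lcd by blast
    qed simp
    then show "Gf m n x (?k * h / (2 * pi * real m)) \<le> 1 / (1 + ?k^2) + Q"
      unfolding Q_def using G_total[OF m1 n1 a b g inc h_def] by blast
  qed simp
  also have "\<dots> = 20 / real N + 4 * Q" using N1 by (simp add: field_simps power2_eq_square)
  finally show ?thesis unfolding Q_def .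
qed

lemma LCD_nonneg: "0 \<le> LCD n \<alpha> \<beta> x"
  unfolding LCD_def by (rule Inf_greatest) auto

lemma lcd_cases:
  assumes m1: "m \<ge> 1" and hyp: "ereal \<epsilon> \<ge> 1 / (ereal (2 * pi * real m) * L)" and L0: "0 \<le> L"
  shows "(L = \<infinity> \<and> 0 \<le> \<epsilon>) \<or> (\<exists>r>0. L = ereal r \<and> 1 / (2 * pi * real m * r) \<le> \<epsilon>)"
proof (cases L)
  case (real r)
  have r0: "0 \<le> r" using L0 real by simp
  show ?thesis
  proof (cases "r = 0")
    case True
    then have "ereal (2 * pi * real m) * L = 0" using real by simp
    then have inf: "1 / (ereal (2 * pi * real m) * L) = \<infinity>" by (simp add: divide_ereal_def)
    have "\<infinity> \<le> ereal \<epsilon>" using hyp unfolding inf .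
    then show ?thesis by simp
  next
    case False
    then have r1: "0 < r" using r0 by simp
    have "ereal (2 * pi * real m) * L = ereal (2 * pi * real m * r)" using real by simp
    moreover have "2 * pi * real m * r \<noteq> 0" using r1 m1 by simp
    ultimately have "1 / (ereal (2 * pi * real m) * L) = ereal (1 / (2 * pi * real m * r))"
      by (simp add: divide_ereal_def field_simps)
    then show ?thesis using hyp r1 real by auto
  qed
next
  case PInf
  have inf: "ereal (2 * pi * real m) * L = \<infinity>" using PInf m1 by simp
  have "1 / (ereal (2 * pi * real m) * L) = 0" unfolding inf by simp
  then have "0 \<le> ereal \<epsilon>" using hyp by simp
  then show ?thesis using PInf by simp
next
  case MInf then show ?thesis using L0 by simp
qed

theorem lemma5p3:
  shows "\<exists>c>0. \<forall>(n::nat) (m::nat) (\<alpha>::real) (\<beta>::real) (\<gamma>::real) (x::nat \<Rightarrow> real) (\<epsilon>::real).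
     n \<ge> 1 \<longrightarrow> m \<ge> 1 \<longrightarrow>
     0 < \<alpha> \<longrightarrow> \<alpha> < 1/2 \<longrightarrow> 0 < \<beta> \<longrightarrow> \<beta> < 1/2 \<longrightarrow> 0 < \<gamma> \<longrightarrow> \<gamma> < 1/2 \<longrightarrow>
     \<alpha> * real n \<ge> 2 \<longrightarrow>
     incompressible n \<alpha> \<gamma> x \<longrightarrow>
     ereal \<epsilon> \<ge> 1 / (ereal (2 * pi * real m) * LCD n \<alpha> \<beta> x) \<longrightarrow>
     measure_pmf.prob (Dn m n) {X. \<bar>\<Sum>i<n. X i * x i\<bar> \<le> \<epsilon>}
       \<le> c * (\<epsilon> / \<gamma> + 1 / ((\<alpha> * \<beta> * real m) powr (\<alpha> * real n)))"
proof (intro exI[of _ 600] conjI allI impI)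
  fix n m :: nat and \<alpha> \<beta> \<gamma> \<epsilon> :: real and x :: "nat \<Rightarrow> real"
  assume n1: "n \<ge> 1" and m1: "m \<ge> 1" and a0: "0 < \<alpha>" and a1: "\<alpha> < 1/2" and b0: "0 < \<beta>" and b1: "\<beta> < 1/2"
    and g0: "0 < \<gamma>" and g1: "\<gamma> < 1/2" and an: "\<alpha> * real n \<ge> 2" and inc: "incompressible n \<alpha> \<gamma> x"
    and hyp: "ereal \<epsilon> \<ge> 1 / (ereal (2 * pi * real m) * LCD n \<alpha> \<beta> x)"
  let ?P = "measure_pmf.prob (Dn m n) {X. \<bar>\<Sum>i<n. X i * x i\<bar> \<le> \<epsilon>}"
  define Q where "Q = 1 / ((\<alpha> * \<beta> * real m) powr (\<alpha> * real n))"
  define h where "h = 4 * pi / \<gamma>"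
  have Q0: "0 \<le> Q" unfolding Q_def by simp
  have h0: "0 < h" unfolding h_def using g0 by simp
  have pm: "0 < 2 * pi * real m" using m1 by simp
  have FN: "?P \<le> 20 / real N + 4 * Q"
    if N1: "N \<ge> 1" and e: "(real N - 1) * h * \<epsilon> \<le> 1"
      and lcd: "\<And>\<tau>. 0 < \<tau> \<Longrightarrow> \<tau> \<le> (real N - 1) * h / (2 * pi * real m) \<Longrightarrow> ereal \<tau> < LCD n \<alpha> \<beta> x" for N
    using final_N[OF m1 n1 a0 a1 an b0 g0 inc N1] e lcd unfolding Q_def h_def by blast
  have cases: "(LCD n \<alpha> \<beta> x = \<infinity> \<and> 0 \<le> \<epsilon>) \<or> (\<exists>r>0. LCD n \<alpha> \<beta> x = ereal r \<and> 1 / (2 * pi * real m * r) \<le> \<epsilon>)"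
    using lcd_cases[OF m1 hyp LCD_nonneg] .
  show "?P \<le> 600 * (\<epsilon> / \<gamma> + Q)"
  proof (cases "0 < \<epsilon>")
    case True
    define K where "K = \<lfloor>1 / (2 * h * \<epsilon>)\<rfloor>"
    define N where "N = nat K + 1"
    have K0: "0 \<le> K" unfolding K_def using h0 True by simp
    have NK: "real N - 1 = real_of_int K" unfolding N_def using K0 by simp
    have N1: "N \<ge> 1" unfolding N_def by simp
    have Kle: "real_of_int K \<le> 1 / (2 * h * \<epsilon>)" unfolding K_def by simp
    have Kgt: "1 / (2 * h * \<epsilon>) < real_of_int K + 1" unfolding K_def by linarith
    have he: "0 < h * \<epsilon>" using h0 True by simp
    have e: "(real N - 1) * h * \<epsilon> \<le> 1 / 2"
    proof -
      have "(real N - 1) * h * \<epsilon> = real_of_int K * (h * \<epsilon>)" unfolding NK by simp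
      also have "\<dots> \<le> 1 / (2 * h * \<epsilon>) * (h * \<epsilon>)" using Kle he by (intro mult_right_mono) auto
      also have "\<dots> = 1 / 2" using h0 True by (simp add: field_simps)
      finally show ?thesis .
    qed
    have range: "(real N - 1) * h / (2 * pi * real m) \<le> 1 / (4 * pi * real m * \<epsilon>)"
    proof -
      have "(real N - 1) * h \<le> 1 / (2 * \<epsilon>)" using e True by (simp add: field_simps)
      then have "(real N - 1) * h / (2 * pi * real m) \<le> 1 / (2 * \<epsilon>) / (2 * pi * real m)"
        using pm by (intro divide_right_mono) auto
      also have "\<dots> = 1 / (4 * pi * real m * \<epsilon>)" by (simp add: field_simps)
      finally show ?thesis .
    qed
    have lcd: "ereal \<tau> < LCD n \<alpha> \<beta> x" if t0: "0 < \<tau>" and tl: "\<tau> \<le> (real N - 1) * h / (2 * pi * real m)" for \<tau>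
      using cases
    proof
      assume "LCD n \<alpha> \<beta> x = \<infinity> \<and> 0 \<le> \<epsilon>"
      then show ?thesis by simp
    next
      assume "\<exists>r>0. LCD n \<alpha> \<beta> x = ereal r \<and> 1 / (2 * pi * real m * r) \<le> \<epsilon>"
      then obtain r where r: "0 < r" "LCD n \<alpha> \<beta> x = ereal r" "1 / (2 * pi * real m * r) \<le> \<epsilon>" by auto
      have "1 / (4 * pi * real m * \<epsilon>) \<le> 1 / (4 * pi * real m * (1 / (2 * pi * real m * r)))"
        using r pm True m1 by (intro divide_left_mono mult_left_mono) auto
      also have "\<dots> = r / 2" using pm r m1 by (simp add: field_simps)
      finally have "\<tau> \<le> r / 2" using tl range by linarith
      then have "\<tau> < r" using r by linarith
      then show ?thesis using r by simp
    qed
    have "?P \<le> 20 / real N + 4 * Q" using FN[OF N1 _ lcd] e by linarith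
    also have "20 / real N \<le> 20 * (2 * h * \<epsilon>)"
    proof -
      have "1 / (2 * h * \<epsilon>) < real N" using Kgt NK by linarith
      moreover have p2: "0 < 2 * h * \<epsilon>" using he by (simp add: mult.commute)
      ultimately have "1 < real N * (2 * h * \<epsilon>)" by (simp only: pos_divide_less_eq[OF p2])
      moreover have pN: "0 < real N" using N1 by simp
      ultimately have "1 / real N < 2 * h * \<epsilon>" by (simp only: pos_divide_less_eq[OF pN] mult.commute)
      then show ?thesis by simp
    qed
    also have "20 * (2 * h * \<epsilon>) = 160 * pi * (\<epsilon> / \<gamma>)" unfolding h_def by simp
    also have "160 * pi * (\<epsilon> / \<gamma>) + 4 * Q \<le> 600 * (\<epsilon> / \<gamma>) + 600 * Q"
    proof -
      have "160 * pi \<le> 600" using pi_approx by simp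
      moreover have "0 \<le> \<epsilon> / \<gamma>" using True g0 by simp
      ultimately have "160 * pi * (\<epsilon> / \<gamma>) \<le> 600 * (\<epsilon> / \<gamma>)" by (intro mult_right_mono) auto
      then show ?thesis using Q0 by linarith
    qed
    finally show ?thesis by (simp add: algebra_simps)
  next
    case False
    have inf: "LCD n \<alpha> \<beta> x = \<infinity> \<and> \<epsilon> = 0" using cases
    proof
      assume "LCD n \<alpha> \<beta> x = \<infinity> \<and> 0 \<le> \<epsilon>"
      then show ?thesis using False by simp
    next
      assume "\<exists>r>0. LCD n \<alpha> \<beta> x = ereal r \<and> 1 / (2 * pi * real m * r) \<le> \<epsilon>"
      then obtain r where r: "0 < r" "1 / (2 * pi * real m * r) \<le> \<epsilon>" by auto
      have "0 < 1 / (2 * pi * real m * r)" using r pm by simp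
      then show ?thesis using r False by linarith
    qed
    have all: "?P \<le> 20 / real N + 4 * Q" if N1: "N \<ge> 1" for N
      using FN[OF N1] inf by simp
    have "?P \<le> 4 * Q"
    proof (rule ccontr)
      assume "\<not> ?P \<le> 4 * Q"
      then have d: "0 < ?P - 4 * Q" by simp
      obtain N :: nat where N: "20 / (?P - 4 * Q) < real N" using reals_Archimedean2 by blast
      have N1: "N \<ge> 1" using N d by (cases N) (auto simp: not_less)
      have "20 / real N < ?P - 4 * Q" using N d N1 by (simp add: field_simps)
      then show False using all[OF N1] by linarith
    qed
    then show ?thesis using Q0 inf by simp
  qed
qed simp

end
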